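(* Let $\mathcal{P}=\langle P,\le\rangle$ be a finite bounded poset with $|P|\ge 2$, bottom $\bot$, top $\top$, and height $H$. Define $R^{+}_{c}(a)=[\,H(\uparrow a)-1,\; H+H(\downarrow a)-2\,]$ for $a\in P$. Then: (i) for every $a\in P$ we have $H(\uparrow a)-1\le H+H(\downarrow a)-2$, so $R^{+}_{c}(a)$ is an interval with nonnegative integer endpoints; moreover, writing $R^{+}_{c}(a)=[r_*(a),r^*(a)]$, the map $r_*$ is strictly antitone and $r^*$ is strictly isotone (i.e. $a<b$ implies $r_*(a)>r_*(b)$ and $r^*(a)<r^*(b)$), and consequently $a<b$ implies $R^{+}_{c}(a)\subsetneq R^{+}_{c}(b)$; that is, $R^{+}_{c}$ is a strict interval rank function for the subset order $\subseteq$; (ii) $R^{+}_{c}(\top)=[0,2(H-1)]$ and $R^{+}_{c}(\bot)=[H-1,H-1]$; (iii) if $R:P\to\overline{\mathbb{N}}$, $R(a)=[r_*(a),r^*(a)]$, is any strict interval rank function for $\subseteq$ (i.e. $a<b$ implies $R(a)\subsetneq R(b)$, and $r_*$ is strictly antitone and $r^*$ strictly isotone) such that $0\le r_*(a)\le r^*(a)\le 2(H-1)$ for all $a\in P$, then for every $a\in P$ we have $R(a)\ge_W R^{+}_{c}(a)$, i.e. $r_*(a)\ge H(\uparrow a)-1$ and $r^*(a)\ge H+H(\downarrow a)-2$.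
   Context: A poset is bounded if it has a least element $\bot$ and a greatest element $\top$. The height $H(\mathcal{Q})$ of a finite poset is the number of elements of its largest chain; $H=H(\mathcal{P})$. For $a\in P$, $\uparrow a=\{b\in P: b\ge a\}$ and $\downarrow a=\{b\in P:b\le a\}$, viewed as subposets; $H(\uparrow a)$, $H(\downarrow a)$ are their heights. $\overline{\mathbb{N}}$ denotes the set of intervals $[x_*,x^*]$ with integers $0\le x_*\le x^*$. The subset order on intervals: $[x_*,x^*]\subseteq[y_*,y^*]$ iff $x_*\ge y_*$ and $x^*\le y^*$. The weak order: $[x_*,x^*]\le_W[y_*,y^*]$ iff $x_*\le y_*$ and $x^*\le y^*$; $\ge_W$ is its dual. *)

theory Defs
  imports Main
begin

definition chain_in :: "'a::order set \<Rightarrow> 'a set \<Rightarrow> bool" where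
  "chain_in S C \<longleftrightarrow> C \<subseteq> S \<and> (\<forall>x\<in>C. \<forall>y\<in>C. x \<le> y \<or> y \<le> x)"

definition height :: "'a::order set \<Rightarrow> nat" where
  "height S = Max {card C | C. chain_in S C}"

definition up_set :: "'a::order set \<Rightarrow> 'a \<Rightarrow> 'a set" where
  "up_set S a = {b\<in>S. a \<le> b}"

definition down_set :: "'a::order set \<Rightarrow> 'a \<Rightarrow> 'a set" where
  "down_set S a = {b\<in>S. b \<le> a}"

text \<open>Intervals [x_*, x^*] represented as pairs (x_*, x^*) of integers.\<close>
definition iv_subset :: "int \<times> int \<Rightarrow> int \<times> int \<Rightarrow> bool" where
  "iv_subset x y \<longleftrightarrow> fst y \<le> fst x \<and> snd x \<le> snd y"

definition iv_psubset :: "int \<times> int \<Rightarrow> int \<times> int \<Rightarrow> bool" where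
  "iv_psubset x y \<longleftrightarrow> iv_subset x y \<and> x \<noteq> y"

definition weak_le :: "int \<times> int \<Rightarrow> int \<times> int \<Rightarrow> bool" where
  "weak_le x y \<longleftrightarrow> fst x \<le> fst y \<and> snd x \<le> snd y"

definition strict_interval_rank :: "'a::order set \<Rightarrow> ('a \<Rightarrow> int \<times> int) \<Rightarrow> bool" where
  "strict_interval_rank P R \<longleftrightarrow>
     (\<forall>a\<in>P. \<forall>b\<in>P. a < b \<longrightarrow>
        iv_psubset (R a) (R b) \<and> fst (R a) > fst (R b) \<and> snd (R a) < snd (R b))"

definition Rc :: "'a::order set \<Rightarrow> 'a \<Rightarrow> int \<times> int" where
  "Rc P a = (int (height (up_set P a)) - 1,
             int (height P) + int (height (down_set P a)) - 2)"

end

theory Submission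
  imports Defs
begin

lemma chain_bound_min:
  fixes f :: "'a::order \<Rightarrow> int"
  shows "finite C \<Longrightarrow> card C = n \<Longrightarrow> (\<forall>x\<in>C. \<forall>y\<in>C. x \<le> y \<or> y \<le> x) \<Longrightarrow>
    (\<forall>x\<in>C. \<forall>y\<in>C. x < y \<longrightarrow> f y < f x) \<Longrightarrow> (\<forall>x\<in>C. lo \<le> f x) \<Longrightarrow>
    x \<in> C \<Longrightarrow> (\<forall>y\<in>C. x \<le> y) \<Longrightarrow> lo + int (card C) - 1 \<le> f x"
proof (induction n arbitrary: C x)
  case 0
  then show ?case by auto
next
  case (Suc n)
  show ?case
  proof (cases "C - {x} = {}")
    case True
    then have "C = {x}" using Suc.prems by auto
    then show ?thesis using Suc.prems by auto
  next
    case False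
    obtain x' where x': "x' \<in> C - {x}" "\<forall>b\<in>C - {x}. b \<le> x' \<longrightarrow> x' = b"
      using finite_has_minimal[of "C - {x}"] False Suc.prems(1) by auto
    have xmin: "\<forall>y\<in>C - {x}. x' \<le> y"
      using x' Suc.prems(3) by (metis DiffD1)
    have "lo + int (card (C - {x})) - 1 \<le> f x'"
      apply (rule Suc.IH)
      using Suc.prems x' xmin by auto
    moreover have "x < x'" using x' Suc.prems(7) by auto
    then have "f x' < f x" using x' Suc.prems by auto
    moreover have "card (C - {x}) = card C - 1" using Suc.prems by auto
    moreover have "card C \<ge> 1" using Suc.prems by auto
    ultimately show ?thesis by linarith
  qed
qed

lemma chain_bound_max:
  fixes f :: "'a::order \<Rightarrow> int"
  shows "finite C \<Longrightarrow> card C = n \<Longrightarrow> (\<forall>x\<in>C. \<forall>y\<in>C. x \<le> y \<or> y \<le> x) \<Longrightarrow>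
    (\<forall>x\<in>C. \<forall>y\<in>C. x < y \<longrightarrow> f x < f y) \<Longrightarrow> (\<forall>x\<in>C. lo \<le> f x) \<Longrightarrow>
    x \<in> C \<Longrightarrow> (\<forall>y\<in>C. y \<le> x) \<Longrightarrow> lo + int (card C) - 1 \<le> f x"
proof (induction n arbitrary: C x)
  case 0
  then show ?case by auto
next
  case (Suc n)
  show ?case
  proof (cases "C - {x} = {}")
    case True
    then have "C = {x}" using Suc.prems by auto
    then show ?thesis using Suc.prems by auto
  next
    case False
    obtain x' where x': "x' \<in> C - {x}" "\<forall>b\<in>C - {x}. x' \<le> b \<longrightarrow> x' = b"
      using finite_has_maximal[of "C - {x}"] False Suc.prems(1) by auto
    have xmax: "\<forall>y\<in>C - {x}. y \<le> x'"
      using x' Suc.prems(3) by (metis DiffD1)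
    have "lo + int (card (C - {x})) - 1 \<le> f x'"
      apply (rule Suc.IH)
      using Suc.prems x' xmax by auto
    moreover have "x' < x" using x' Suc.prems(7) by auto
    then have "f x' < f x" using x' Suc.prems by auto
    moreover have "card (C - {x}) = card C - 1" using Suc.prems by auto
    moreover have "card C \<ge> 1" using Suc.prems by auto
    ultimately show ?thesis by linarith
  qed
qed

lemma chains_finite:
  assumes "finite S" shows "finite {card C | C. chain_in S C}"
proof -
  have "{card C | C. chain_in S C} = card ` {C. chain_in S C}" by auto
  moreover have "{C. chain_in S C} \<subseteq> Pow S" by (auto simp: chain_in_def)
  ultimately show ?thesis using assms by (metis finite_Pow_iff finite_imageI finite_subset)
qed

lemma chain_le_height:
  assumes "finite S" "chain_in S C" shows "card C \<le> height S"
  unfolding height_def using chains_finite[OF assms(1)] assms(2)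
  by (intro Max_ge) auto

lemma height_attained:
  assumes "finite S" shows "\<exists>C. chain_in S C \<and> card C = height S"
proof -
  have "chain_in S {}" by (simp add: chain_in_def)
  then have "{card C | C. chain_in S C} \<noteq> {}" by auto
  from Max_in[OF chains_finite[OF assms] this] show ?thesis
    unfolding height_def by auto
qed

lemma chain_fin: "finite S \<Longrightarrow> chain_in S C \<Longrightarrow> finite C"
  unfolding chain_in_def using finite_subset by auto

lemma max_chain_with:
  assumes "finite S" "x \<in> S" "\<forall>y\<in>S. x \<le> y \<or> y \<le> x"
  shows "\<exists>C. chain_in S C \<and> card C = height S \<and> x \<in> C"
proof -
  obtain C where C: "chain_in S C" "card C = height S" using height_attained[OF assms(1)] by auto
  show ?thesis
  proof (cases "x \<in> C")
    case True then show ?thesis using C by auto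
  next
    case False
    have "chain_in S (insert x C)" using C assms unfolding chain_in_def by auto
    then have "card (insert x C) \<le> height S" using chain_le_height assms by auto
    moreover have "card (insert x C) = card C + 1" using False chain_fin[OF assms(1) C(1)] by auto
    ultimately show ?thesis using C by auto
  qed
qed

lemma height_single: "height {x} = 1"
proof -
  have "chain_in {x} {x}" by (simp add: chain_in_def)
  then have "1 \<le> height {x}" using chain_le_height[of "{x}" "{x}"] by auto
  moreover obtain C where "chain_in {x} C" "card C = height {x}" using height_attained[of "{x}"] by auto
  then have "height {x} \<le> 1" unfolding chain_in_def
    using card_mono[of "{x}" C] by auto
  ultimately show ?thesis by auto
qed

lemma height_pos:
  assumes "finite S" "x \<in> S" shows "1 \<le> height S"
proof -
  have "chain_in S {x}" using assms by (simp add: chain_in_def)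
  then show ?thesis using chain_le_height[OF assms(1)] by fastforce
qed

lemma up_strict:
  assumes fin: "finite P" and a: "a \<in> P" and b: "b \<in> P" and ab: "a < b"
  shows "height (up_set P b) < height (up_set P a)"
proof -
  have fb: "finite (up_set P b)" using fin by (simp add: up_set_def)
  have fa: "finite (up_set P a)" using fin by (simp add: up_set_def)
  obtain C where C: "chain_in (up_set P b) C" "card C = height (up_set P b)"
    using height_attained[OF fb] by auto
  have Cs: "C \<subseteq> P" "\<forall>x\<in>C. b \<le> x" "\<forall>x\<in>C. \<forall>y\<in>C. x \<le> y \<or> y \<le> x"
    using C(1) unfolding chain_in_def up_set_def by auto
  have "\<forall>x\<in>C. a \<le> x" using Cs(2) ab by (auto dest: order.strict_trans1 intro: less_imp_le)
  then have "chain_in (up_set P a) (insert a C)" using Cs a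
    unfolding chain_in_def up_set_def by auto
  then have 1: "card (insert a C) \<le> height (up_set P a)" using chain_le_height[OF fa] by auto
  have "a \<notin> C" using Cs(2) ab by auto
  then have 2: "card (insert a C) = card C + 1" using chain_fin[OF fb C(1)] by auto
  show ?thesis using 1 2 C(2) by linarith
qed

lemma down_strict:
  assumes fin: "finite P" and a: "a \<in> P" and b: "b \<in> P" and ab: "a < b"
  shows "height (down_set P a) < height (down_set P b)"
proof -
  have fb: "finite (down_set P b)" using fin by (simp add: down_set_def)
  have fa: "finite (down_set P a)" using fin by (simp add: down_set_def)
  obtain C where C: "chain_in (down_set P a) C" "card C = height (down_set P a)"
    using height_attained[OF fa] by auto
  have Cs: "C \<subseteq> P" "\<forall>x\<in>C. x \<le> a" "\<forall>x\<in>C. \<forall>y\<in>C. x \<le> y \<or> y \<le> x"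
    using C(1) unfolding chain_in_def down_set_def by auto
  have "\<forall>x\<in>C. x \<le> b" using Cs(2) ab by (auto dest: order.strict_trans2 intro: less_imp_le)
  then have "chain_in (down_set P b) (insert b C)" using Cs b
    unfolding chain_in_def down_set_def by auto
  then have 1: "card (insert b C) \<le> height (down_set P b)" using chain_le_height[OF fb] by auto
  have "b \<notin> C" using Cs(2) ab by auto
  then have 2: "card (insert b C) = card C + 1" using chain_fin[OF fa C(1)] by auto
  show ?thesis using 1 2 C(2) by linarith
qed

lemma height_mono:
  assumes "finite T" "S \<subseteq> T" shows "height S \<le> height T"
proof -
  obtain C where "chain_in S C" "card C = height S"
    using height_attained[of S] assms finite_subset by blast
  then have "chain_in T C" using assms unfolding chain_in_def by auto
  then have "card C \<le> height T" using chain_le_height[OF assms(1)] by blast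
  then show ?thesis using \<open>card C = height S\<close> by simp
qed

theorem proposition3:
  fixes P :: "'a::order set" and bt tp :: 'a
  assumes fin: "finite P" and card: "card P \<ge> 2"
    and bt: "bt \<in> P" and tp: "tp \<in> P"
    and bounded: "\<forall>x\<in>P. bt \<le> x \<and> x \<le> tp"
  shows "(\<forall>a\<in>P. 0 \<le> fst (Rc P a) \<and> fst (Rc P a) \<le> snd (Rc P a))
       \<and> strict_interval_rank P (Rc P)
       \<and> Rc P tp = (0, 2 * (int (height P) - 1))
       \<and> Rc P bt = (int (height P) - 1, int (height P) - 1)
       \<and> (\<forall>R :: 'a \<Rightarrow> int \<times> int.
            strict_interval_rank P R
            \<and> (\<forall>a\<in>P. 0 \<le> fst (R a) \<and> fst (R a) \<le> snd (R a)
                       \<and> snd (R a) \<le> 2 * (int (height P) - 1))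
            \<longrightarrow> (\<forall>a\<in>P. weak_le (Rc P a) (R a)))"
proof -
  have upfin: "\<And>a. finite (up_set P a)" using fin by (simp add: up_set_def)
  have downfin: "\<And>a. finite (down_set P a)" using fin by (simp add: down_set_def)
  have upin: "\<And>a. a \<in> P \<Longrightarrow> a \<in> up_set P a" by (simp add: up_set_def)
  have downin: "\<And>a. a \<in> P \<Longrightarrow> a \<in> down_set P a" by (simp add: down_set_def)
  have uppos: "\<And>a. a \<in> P \<Longrightarrow> 1 \<le> height (up_set P a)" using height_pos upfin upin by blast
  have downpos: "\<And>a. a \<in> P \<Longrightarrow> 1 \<le> height (down_set P a)" using height_pos downfin downin by blast
  have upH: "\<And>a. height (up_set P a) \<le> height P" using height_mono[OF fin] by (simp add: up_set_def)
  have uptp: "up_set P tp = {tp}" using bounded tp by (auto simp: up_set_def intro: order.antisym)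
  have downtp: "down_set P tp = P" using bounded by (auto simp: down_set_def)
  have upbt: "up_set P bt = P" using bounded by (auto simp: up_set_def)
  have downbt: "down_set P bt = {bt}" using bounded bt by (auto simp: down_set_def intro: order.antisym)
  have p1: "\<forall>a\<in>P. 0 \<le> fst (Rc P a) \<and> fst (Rc P a) \<le> snd (Rc P a)"
  proof
    fix a assume "a \<in> P"
    then show "0 \<le> fst (Rc P a) \<and> fst (Rc P a) \<le> snd (Rc P a)"
      using uppos[of a] downpos[of a] upH[of a] by (simp add: Rc_def)
  qed
  have p2: "strict_interval_rank P (Rc P)"
    unfolding strict_interval_rank_def iv_psubset_def iv_subset_def
    using up_strict[OF fin] down_strict[OF fin] by (fastforce simp: Rc_def)
  have p3: "Rc P tp = (0, 2 * (int (height P) - 1))"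
    by (simp add: Rc_def uptp downtp height_single)
  have p4: "Rc P bt = (int (height P) - 1, int (height P) - 1)"
    by (simp add: Rc_def upbt downbt height_single)
  have p5: "\<forall>R :: 'a \<Rightarrow> int \<times> int.
            strict_interval_rank P R
            \<and> (\<forall>a\<in>P. 0 \<le> fst (R a) \<and> fst (R a) \<le> snd (R a)
                       \<and> snd (R a) \<le> 2 * (int (height P) - 1))
            \<longrightarrow> (\<forall>a\<in>P. weak_le (Rc P a) (R a))"
  proof (intro allI impI ballI)
    fix R :: "'a \<Rightarrow> int \<times> int" and a
    assume H: "strict_interval_rank P R
            \<and> (\<forall>a\<in>P. 0 \<le> fst (R a) \<and> fst (R a) \<le> snd (R a)
                       \<and> snd (R a) \<le> 2 * (int (height P) - 1))"
      and a: "a \<in> P"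
    have sr: "\<And>x y. x \<in> P \<Longrightarrow> y \<in> P \<Longrightarrow> x < y \<Longrightarrow> fst (R y) < fst (R x) \<and> snd (R x) < snd (R y)"
      using H unfolding strict_interval_rank_def by auto
    have lowbd: "\<And>a. a \<in> P \<Longrightarrow> int (height (up_set P a)) - 1 \<le> fst (R a)"
    proof -
      fix a assume a: "a \<in> P"
      obtain C where C: "chain_in (up_set P a) C" "card C = height (up_set P a)" "a \<in> C"
      proof -
        have "\<forall>y\<in>up_set P a. a \<le> y \<or> y \<le> a" by (simp add: up_set_def)
        from max_chain_with[OF upfin upin[OF a] this] show ?thesis using that by blast
      qed
      have "0 + int (card C) - 1 \<le> fst (R a)"
      proof (rule chain_bound_min[where C=C and n="card C" and f="\<lambda>x. fst (R x)"])
        have CP: "C \<subseteq> P" "\<forall>x\<in>C. a \<le> x" using C(1) unfolding chain_in_def up_set_def by auto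
        show "finite C" using chain_fin[OF upfin C(1)] .
        show "\<forall>x\<in>C. \<forall>y\<in>C. x \<le> y \<or> y \<le> x" using C(1) unfolding chain_in_def by blast
        show "\<forall>x\<in>C. \<forall>y\<in>C. x < y \<longrightarrow> fst (R y) < fst (R x)" using CP sr by blast
        show "\<forall>x\<in>C. 0 \<le> fst (R x)" using CP H by blast
        show "\<forall>y\<in>C. a \<le> y" using CP by blast
      qed (use C in auto)
      then show "int (height (up_set P a)) - 1 \<le> fst (R a)" using C by simp
    qed
    have hb: "int (height P) - 1 \<le> snd (R bt)"
    proof -
      have "fst (R bt) \<le> snd (R bt)" using H bt by blast
      then show ?thesis using lowbd[OF bt] upbt by simp
    qed
    obtain D where D: "chain_in (down_set P a) D" "card D = height (down_set P a)" "bt \<in> D"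
    proof -
      have "bt \<in> down_set P a" using bt bounded a by (simp add: down_set_def)
      moreover have "\<forall>y\<in>down_set P a. bt \<le> y \<or> y \<le> bt" using bounded by (simp add: down_set_def)
      ultimately show ?thesis using max_chain_with[OF downfin] that by blast
    qed
    have "snd (R bt) + int (card D) - 1 \<le> snd (R a)"
    proof (rule chain_bound_max[where C=D and n="card D" and f="\<lambda>x. snd (R x)"])
      show "\<forall>x\<in>D. snd (R bt) \<le> snd (R x)"
      proof
        fix x assume "x \<in> D"
        then have x: "x \<in> P" "bt \<le> x" using D bounded unfolding chain_in_def down_set_def by auto
        show "snd (R bt) \<le> snd (R x)"
        proof (cases "x = bt")
          case False then show ?thesis using sr[OF bt x(1)] x by (auto simp: order.order_iff_strict)
        qed simp
      qed
    next
      have DP: "D \<subseteq> P" "\<forall>x\<in>D. x \<le> a" using D(1) unfolding chain_in_def down_set_def by auto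
      show "finite D" using chain_fin[OF downfin D(1)] .
      show "\<forall>x\<in>D. \<forall>y\<in>D. x \<le> y \<or> y \<le> x" using D(1) unfolding chain_in_def by blast
      show "\<forall>x\<in>D. \<forall>y\<in>D. x < y \<longrightarrow> snd (R x) < snd (R y)" using DP sr by blast
      show "\<forall>y\<in>D. y \<le> a" using DP by blast
      show "a \<in> D"
      proof (rule ccontr)
        assume "a \<notin> D"
        have "chain_in (down_set P a) (insert a D)" using D(1) a DP unfolding chain_in_def down_set_def by auto
        then have "card (insert a D) \<le> height (down_set P a)" using chain_le_height[OF downfin] by blast
        moreover have "card (insert a D) = card D + 1" using \<open>a \<notin> D\<close> chain_fin[OF downfin D(1)] by simp
        ultimately show False using D(2) by simp
      qed
    qed simp
    then have "int (height P) + int (height (down_set P a)) - 2 \<le> snd (R a)" using hb D by linarith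
    then show "weak_le (Rc P a) (R a)" using lowbd[OF a] by (simp add: weak_le_def Rc_def)
  qed
  show ?thesis using p1 p2 p3 p4 p5 by blast
qed

end
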